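(* For any Boolean function $f:\{0,1\}^n\to\{0,1\}$, $\mathsf{KI}(f)\le\mathrm{depth}(f)$.
   Context: Fix a universal prefix-free Turing machine and let $K(a\mid b)$ denote the prefix-free Kolmogorov complexity of $a$ given $b$. For $f:S\to\{0,1\}$, $S\subseteq\Sigma^n$, $$\mathsf{KI}(f)=\min_{\alpha\in\Sigma^*}\ \max_{x,y:\ f(x)\neq f(y)}\ \min_{i:\ x_i\neq y_i}\big(K(i\mid x,\alpha)+K(i\mid y,\alpha)\big).$$ $\mathrm{depth}(f)$ is the minimum depth of a formula (binary tree with internal nodes labeled $\wedge,\vee$ and leaves labeled by literals $x_i,\neg x_i$) computing $f$. *)

theory Defs
  imports Main "HOL-Library.Sublist"
begin

datatype recf = Zero | Succ | Proj nat | Comp recf "recf list" | PrimRec recf recf | Mu recf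

inductive reval :: "recf \<Rightarrow> nat list \<Rightarrow> nat \<Rightarrow> bool" where
  zero: "reval Zero xs 0"
| succ: "reval Succ (x # xs) (Suc x)"
| proj: "i < length xs \<Longrightarrow> reval (Proj i) xs (xs ! i)"
| comp: "list_all2 (\<lambda>g y. reval g xs y) gs ys \<Longrightarrow> reval f ys z \<Longrightarrow> reval (Comp f gs) xs z"
| prim0: "reval g xs y \<Longrightarrow> reval (PrimRec g h) (0 # xs) y"
| primS: "reval (PrimRec g h) (n # xs) y \<Longrightarrow> reval h (y # n # xs) z
           \<Longrightarrow> reval (PrimRec g h) (Suc n # xs) z"
| mu: "reval f (n # xs) 0 \<Longrightarrow> (\<forall>m<n. \<exists>v. reval f (m # xs) (Suc v)) \<Longrightarrow> reval (Mu f) xs n"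

definition comp2 :: "(nat \<Rightarrow> nat \<Rightarrow> nat option) \<Rightarrow> bool" where
  "comp2 g \<longleftrightarrow> (\<exists>r. \<forall>a b v. reval r [a, b] v \<longleftrightarrow> g a b = Some v)"

fun nat_of_bl :: "bool list \<Rightarrow> nat" where
  "nat_of_bl [] = 0"
| "nat_of_bl (b # bs) = 2 * nat_of_bl bs + (if b then 2 else 1)"

fun bl_of_nat :: "nat \<Rightarrow> bool list" where
  "bl_of_nat 0 = []"
| "bl_of_nat (Suc n) = (odd n) # bl_of_nat (n div 2)"

text \<open>A machine maps (program, condition) to an optional output string.\<close>
type_synonym machine = "bool list \<Rightarrow> bool list \<Rightarrow> bool list option"

definition computable_machine :: "machine \<Rightarrow> bool" where
  "computable_machine M \<longleftrightarrow>
     comp2 (\<lambda>a b. map_option nat_of_bl (M (bl_of_nat a) (bl_of_nat b)))"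

definition prefix_free_machine :: "machine \<Rightarrow> bool" where
  "prefix_free_machine M \<longleftrightarrow> computable_machine M \<and>
     (\<forall>y p q. M p y \<noteq> None \<longrightarrow> M q y \<noteq> None \<longrightarrow> prefix p q \<longrightarrow> p = q)"

definition universal_pf :: "machine \<Rightarrow> bool" where
  "universal_pf U \<longleftrightarrow> prefix_free_machine U \<and>
     (\<forall>M. prefix_free_machine M \<longrightarrow> (\<exists>\<sigma>. \<forall>p y. U (\<sigma> @ p) y = M p y))"

definition KC :: "machine \<Rightarrow> bool list \<Rightarrow> bool list \<Rightarrow> nat" where
  "KC U a b = Inf (length ` {p. U p b = Some a})"

text \<open>Self-delimiting encoding of a pair of strings (used for conditions (x, alpha)).\<close>
definition pair_bl :: "bool list \<Rightarrow> bool list \<Rightarrow> bool list" where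
  "pair_bl x a = concat (map (\<lambda>b. [b, b]) x) @ [False, True] @ a"

text \<open>Inputs are bool lists of length n; coordinates are indexed 1..n; an index i is
  given to the machine as the string bl_of_nat i.\<close>
definition KI :: "machine \<Rightarrow> nat \<Rightarrow> (bool list \<Rightarrow> bool) \<Rightarrow> nat" where
  "KI U n f = (INF \<alpha>. SUP xy \<in> {(x, y). length x = n \<and> length y = n \<and> f x \<noteq> f y}.
      INF i \<in> {i. 1 \<le> i \<and> i \<le> n \<and> fst xy ! (i - 1) \<noteq> snd xy ! (i - 1)}.
        KC U (bl_of_nat i) (pair_bl (fst xy) \<alpha>) + KC U (bl_of_nat i) (pair_bl (snd xy) \<alpha>))"

datatype form = Lit nat bool | And form form | Or form form

fun feval :: "form \<Rightarrow> bool list \<Rightarrow> bool" where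
  "feval (Lit i b) x = (if b then x ! (i - 1) else \<not> x ! (i - 1))"
| "feval (And a b) x = (feval a x \<and> feval b x)"
| "feval (Or a b) x = (feval a x \<or> feval b x)"

fun fvars :: "form \<Rightarrow> nat set" where
  "fvars (Lit i b) = {i}"
| "fvars (And a b) = fvars a \<union> fvars b"
| "fvars (Or a b) = fvars a \<union> fvars b"

fun fdepth :: "form \<Rightarrow> nat" where
  "fdepth (Lit i b) = 0"
| "fdepth (And a b) = Suc (max (fdepth a) (fdepth b))"
| "fdepth (Or a b) = Suc (max (fdepth a) (fdepth b))"

definition computes :: "nat \<Rightarrow> form \<Rightarrow> (bool list \<Rightarrow> bool) \<Rightarrow> bool" where
  "computes n \<phi> f \<longleftrightarrow> fvars \<phi> \<subseteq> {1..n} \<and> (\<forall>x. length x = n \<longrightarrow> feval \<phi> x = f x)"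

definition depth :: "nat \<Rightarrow> (bool list \<Rightarrow> bool) \<Rightarrow> nat" where
  "depth n f = Inf (fdepth ` {\<phi>. computes n \<phi> f})"

end

theory Submission
  imports Defs "HOL-Library.Nat_Bijection"
begin

lemma la2_det: "list_all2 (\<lambda>g y. P g y \<and> (\<forall>w. Q g w \<longrightarrow> y = w)) gs ys \<Longrightarrow> list_all2 Q gs ys' \<Longrightarrow> ys = ys'"
proof (induction gs arbitrary: ys ys')
  case Nil then show ?case by simp
next
  case (Cons g gs) then show ?case by (auto simp: list_all2_Cons1)
qed

inductive_cases zeroE: "reval Zero xs v"
inductive_cases succE: "reval Succ xs v"
inductive_cases projE: "reval (Proj i) xs v"
inductive_cases compE: "reval (Comp f gs) xs v"
inductive_cases primE: "reval (PrimRec g h) xs v"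
inductive_cases muE: "reval (Mu f) xs v"

lemma reval_det: "reval r xs v \<Longrightarrow> reval r xs w \<Longrightarrow> v = w"
proof (induction r xs v arbitrary: w rule: reval.induct)
  case (zero xs)
  then show ?case by (auto elim: zeroE)
next
  case (succ x xs)
  then show ?case by (auto elim: succE)
next
  case (proj i xs)
  then show ?case by (auto elim: projE)
next
  case (comp xs gs ys f z)
  from comp.prems obtain ys' where a: "list_all2 (\<lambda>g y. reval g xs y) gs ys'" and b: "reval f ys' w"
    by (auto elim: compE)
  have "ys = ys'" using comp.IH(1) a by (rule la2_det)
  then show ?case using comp.IH b by simp
next
  case (prim0 g xs y h)
  from prim0.prems show ?case by (rule primE) (use prim0.IH in auto)
next
  case (primS g h n xs y z)
  from primS.prems obtain y' where "reval (PrimRec g h) (n # xs) y'" "reval h (y' # n # xs) w"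
    by (rule primE) auto
  then show ?case using primS.IH by auto
next
  case (mu f n xs)
  from mu.prems have w: "reval f (w # xs) 0" "\<forall>m<w. \<exists>v. reval f (m # xs) (Suc v)"
    using muE[OF mu.prems] by blast+
  show ?case
  proof (rule ccontr)
    assume "n \<noteq> w"
    then have "n < w \<or> w < n" by auto
    then show False
    proof
      assume "n < w" then obtain v where "reval f (n # xs) (Suc v)" using w by auto
      moreover have "\<And>x. reval f (n # xs) x \<Longrightarrow> 0 = x" using mu.IH(1) by blast
      ultimately show False by force
    next
      assume "w < n" 
      then obtain v where "\<And>x. reval f (w # xs) x \<Longrightarrow> Suc v = x" using mu.IH(2) by blast
      then show False using w(1) by force
    qed
  qed
qed


definition ct :: "nat \<Rightarrow> (nat list \<Rightarrow> nat) \<Rightarrow> bool" where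
  "ct k f \<longleftrightarrow> (\<exists>r. \<forall>xs. length xs = k \<longrightarrow> reval r xs (f xs))"

lemma ct_cong: "ct k f \<Longrightarrow> (\<And>xs. length xs = k \<Longrightarrow> f xs = g xs) \<Longrightarrow> ct k g"
  unfolding ct_def by metis

lemma ct_proj: "i < k \<Longrightarrow> ct k (\<lambda>xs. xs ! i)"
  unfolding ct_def by (metis reval.proj)

lemma ct_zero: "ct k (\<lambda>xs. 0)"
  unfolding ct_def by (metis reval.zero)

lemma ct_suc: "ct k f \<Longrightarrow> ct k (\<lambda>xs. Suc (f xs))"
  unfolding ct_def
proof -
  assume "\<exists>r. \<forall>xs. length xs = k \<longrightarrow> reval r xs (f xs)"
  then obtain r where r: "\<forall>xs. length xs = k \<longrightarrow> reval r xs (f xs)" by blast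
  have "\<forall>xs. length xs = k \<longrightarrow> reval (Comp Succ [r]) xs (Suc (f xs))"
  proof (intro allI impI)
    fix xs :: "nat list" assume "length xs = k"
    then have "list_all2 (\<lambda>g y. reval g xs y) [r] [f xs]" using r by simp
    moreover have "reval Succ [f xs] (Suc (f xs))" using reval.succ[of "f xs" "[]"] by simp
    ultimately show "reval (Comp Succ [r]) xs (Suc (f xs))" by (rule reval.comp)
  qed
  then show "\<exists>r. \<forall>xs. length xs = k \<longrightarrow> reval r xs (Suc (f xs))" by blast
qed

lemma ct_const: "ct k (\<lambda>xs. c)"
  by (induction c) (auto intro: ct_zero ct_suc)

lemma ct_list: "\<forall>f\<in>set fs. ct k f \<Longrightarrow>
  \<exists>rs. \<forall>xs. length xs = k \<longrightarrow> list_all2 (\<lambda>g y. reval g xs y) rs (map (\<lambda>f. f xs) fs)"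
proof (induction fs)
  case Nil then show ?case by (intro exI[of _ "[]"]) simp
next
  case (Cons f fs)
  then obtain rs where rs: "\<forall>xs. length xs = k \<longrightarrow> list_all2 (\<lambda>g y. reval g xs y) rs (map (\<lambda>f. f xs) fs)" by auto
  from Cons.prems obtain r where r: "\<forall>xs. length xs = k \<longrightarrow> reval r xs (f xs)" unfolding ct_def by auto
  show ?case by (rule exI[of _ "r # rs"]) (use r rs in auto)
qed

lemma ct_comp: "ct m h \<Longrightarrow> length fs = m \<Longrightarrow> \<forall>f\<in>set fs. ct k f \<Longrightarrow>
   ct k (\<lambda>xs. h (map (\<lambda>f. f xs) fs))"
proof -
  assume h: "ct m h" and l: "length fs = m" and fs: "\<forall>f\<in>set fs. ct k f"
  from h obtain rh where rh: "\<forall>xs. length xs = m \<longrightarrow> reval rh xs (h xs)" unfolding ct_def by auto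
  from ct_list[OF fs] obtain rs where rs: "\<forall>xs. length xs = k \<longrightarrow> list_all2 (\<lambda>g y. reval g xs y) rs (map (\<lambda>f. f xs) fs)" by auto
  show ?thesis unfolding ct_def
  proof (intro exI[of _ "Comp rh rs"] allI impI)
    fix xs :: "nat list" assume "length xs = k"
    then show "reval (Comp rh rs) xs (h (map (\<lambda>f. f xs) fs))"
      using rs rh l by (intro reval.comp) auto
  qed
qed

primrec prk :: "(nat list \<Rightarrow> nat) \<Rightarrow> (nat list \<Rightarrow> nat) \<Rightarrow> nat \<Rightarrow> nat list \<Rightarrow> nat" where
  "prk g h 0 xs = g xs"
| "prk g h (Suc n) xs = h (prk g h n xs # n # xs)"

lemma ct_prim: "ct k g \<Longrightarrow> ct (Suc (Suc k)) h \<Longrightarrow> ct (Suc k) (\<lambda>xs. prk g h (hd xs) (tl xs))"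
proof -
  assume "ct k g" "ct (Suc (Suc k)) h"
  then obtain rg rh where rg: "\<forall>xs. length xs = k \<longrightarrow> reval rg xs (g xs)"
    and rh: "\<forall>xs. length xs = Suc (Suc k) \<longrightarrow> reval rh xs (h xs)" unfolding ct_def by auto
  have *: "reval (PrimRec rg rh) (n # ys) (prk g h n ys)" if "length ys = k" for n ys
  proof (induction n)
    case 0 then show ?case using rg that by (auto intro: reval.prim0)
  next
    case (Suc n) then show ?case using rh that by (auto intro: reval.primS)
  qed
  show ?thesis unfolding ct_def
  proof (intro exI[of _ "PrimRec rg rh"] allI impI)
    fix xs :: "nat list" assume "length xs = Suc k"
    then obtain n ys where "xs = n # ys" "length ys = k" by (cases xs) auto
    then show "reval (PrimRec rg rh) xs (prk g h (hd xs) (tl xs))" using * by simp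
  qed
qed

lemma ct_mu: "ct (Suc k) f \<Longrightarrow> (\<And>xs. length xs = k \<Longrightarrow> \<exists>n. f (n # xs) = 0) \<Longrightarrow>
   ct k (\<lambda>xs. LEAST n. f (n # xs) = 0)"
proof -
  assume f: "ct (Suc k) f" and ex: "\<And>xs. length xs = k \<Longrightarrow> \<exists>n. f (n # xs) = 0"
  then obtain r where r: "\<forall>xs. length xs = Suc k \<longrightarrow> reval r xs (f xs)" unfolding ct_def by auto
  show ?thesis unfolding ct_def
  proof (intro exI[of _ "Mu r"] allI impI)
    fix xs :: "nat list" assume l: "length xs = k"
    let ?n = "LEAST n. f (n # xs) = 0"
    have rr: "\<And>m. reval r (m # xs) (f (m # xs))" using r l by simp
    have "f (?n # xs) = 0" using ex[OF l] by (rule LeastI_ex)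
    moreover have "\<forall>m<?n. \<exists>v. reval r (m # xs) (Suc v)"
    proof (intro allI impI)
      fix m assume "m < ?n"
      then have "f (m # xs) \<noteq> 0" using not_less_Least by blast
      then obtain v where "f (m # xs) = Suc v" by (cases "f (m # xs)") auto
      then show "\<exists>v. reval r (m # xs) (Suc v)" using rr[of m] by auto
    qed
    ultimately show "reval (Mu r) xs ?n" using rr[of ?n] by (intro reval.mu) auto
  qed
qed

lemma ct_mu_partial: "ct (Suc k) f \<Longrightarrow>
   \<exists>r. \<forall>xs v. length xs = k \<longrightarrow> (reval r xs v \<longleftrightarrow> f (v # xs) = 0 \<and> (\<forall>m<v. f (m # xs) \<noteq> 0))"
proof -
  assume f: "ct (Suc k) f"
  then obtain r where r: "\<forall>xs. length xs = Suc k \<longrightarrow> reval r xs (f xs)" unfolding ct_def by auto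
  have "\<forall>xs v. length xs = k \<longrightarrow> (reval (Mu r) xs v \<longleftrightarrow> f (v # xs) = 0 \<and> (\<forall>m<v. f (m # xs) \<noteq> 0))"
  proof (intro allI impI iffI)
    fix xs v assume l: "length xs = k" and "reval (Mu r) xs v"
    then have a: "reval r (v # xs) 0" and b: "\<forall>m<v. \<exists>w. reval r (m # xs) (Suc w)" using muE by blast+
    have rr: "\<And>m. reval r (m # xs) (f (m # xs))" using r l by simp
    have "f (v # xs) = 0" using a rr[of v] reval_det by blast
    moreover have "\<forall>m<v. f (m # xs) \<noteq> 0"
    proof (intro allI impI)
      fix m assume "m < v"
      then obtain w where "reval r (m # xs) (Suc w)" using b by blast
      then show "f (m # xs) \<noteq> 0" using rr[of m] reval_det by fastforce
    qed
    ultimately show "f (v # xs) = 0 \<and> (\<forall>m<v. f (m # xs) \<noteq> 0)" by blast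
  next
    fix xs v assume l: "length xs = k" and h: "f (v # xs) = 0 \<and> (\<forall>m<v. f (m # xs) \<noteq> 0)"
    have rr: "\<And>m. reval r (m # xs) (f (m # xs))" using r l by simp
    have "\<forall>m<v. \<exists>w. reval r (m # xs) (Suc w)"
    proof (intro allI impI)
      fix m assume "m < v"
      then obtain w where "f (m # xs) = Suc w" using h by (cases "f (m # xs)") auto
      then show "\<exists>w. reval r (m # xs) (Suc w)" using rr[of m] by auto
    qed
    then show "reval (Mu r) xs v" using h rr[of v] by (intro reval.mu) auto
  qed
  then show ?thesis by blast
qed


lemma ct_cong': "ct k f \<Longrightarrow> k = k' \<Longrightarrow> (\<And>xs. length xs = k' \<Longrightarrow> f xs = g xs) \<Longrightarrow> ct k' g"
  using ct_cong by blast

lemma ct_comp1: "ct 1 h \<Longrightarrow> ct k f \<Longrightarrow> ct k (\<lambda>xs. h [f xs])"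
  using ct_comp[of 1 h "[f]" k] by simp

lemma ct_comp2: "ct 2 h \<Longrightarrow> ct k f \<Longrightarrow> ct k g \<Longrightarrow> ct k (\<lambda>xs. h [f xs, g xs])"
  using ct_comp[of 2 h "[f, g]" k] by simp

lemma ct_comp3: "ct 3 h \<Longrightarrow> ct k f \<Longrightarrow> ct k g \<Longrightarrow> ct k e \<Longrightarrow> ct k (\<lambda>xs. h [f xs, g xs, e xs])"
  using ct_comp[of 3 h "[f, g, e]" k] by (simp add: numeral_3_eq_3)

lemma ct_tl: "ct k f \<Longrightarrow> ct (Suc k) (\<lambda>xs. f (tl xs))"
proof -
  assume f: "ct k f"
  have "ct (Suc k) (\<lambda>xs. f (map (\<lambda>g. g xs) (map (\<lambda>i xs. xs ! Suc i) [0..<k])))"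
    by (rule ct_comp[OF f]) (auto intro: ct_proj)
  then show ?thesis
  proof (rule ct_cong)
    fix xs :: "nat list" assume "length xs = Suc k"
    then show "f (map (\<lambda>g. g xs) (map (\<lambda>i xs. xs ! Suc i) [0..<k])) = f (tl xs)"
      by (cases xs) (auto simp: map_nth[symmetric] simp del: map_nth intro!: arg_cong[where f=f] nth_equalityI)
  qed
qed

lemma ct_cons: "ct (Suc k) h \<Longrightarrow> ct k g \<Longrightarrow> ct k (\<lambda>xs. h (g xs # xs))"
proof -
  assume h: "ct (Suc k) h" and g: "ct k g"
  have "ct k (\<lambda>xs. h (map (\<lambda>f. f xs) (g # map (\<lambda>i xs. xs ! i) [0..<k])))"
    by (rule ct_comp[OF h]) (auto intro: ct_proj g)
  then show ?thesis
  proof (rule ct_cong)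
    fix xs :: "nat list" assume "length xs = k"
    then show "h (map (\<lambda>f. f xs) (g # map (\<lambda>i xs. xs ! i) [0..<k])) = h (g xs # xs)"
      by (simp add: o_def) (metis map_nth)
  qed
qed

lemma prk_add: "prk (\<lambda>xs. xs ! 0) (\<lambda>zs. Suc (zs ! 0)) n [y] = n + y"
  by (induction n) auto

lemma ct_add0: "ct 2 (\<lambda>xs. xs ! 0 + xs ! 1)"
proof -
  have "ct (Suc 1) (\<lambda>xs. prk (\<lambda>xs. xs ! 0) (\<lambda>zs. Suc (zs ! 0)) (hd xs) (tl xs))"
    by (rule ct_prim) (auto intro: ct_proj ct_suc)
  then show ?thesis
    by (rule ct_cong') (auto simp: length_Suc_conv numeral_2_eq_2 prk_add[simplified])
qed

lemma ct_add: "ct k f \<Longrightarrow> ct k g \<Longrightarrow> ct k (\<lambda>xs. f xs + g xs)"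
  using ct_comp2[OF ct_add0] by simp

lemma prk_mult: "prk (\<lambda>xs. 0) (\<lambda>zs. zs ! 0 + zs ! Suc (Suc 0)) n [y] = n * y"
  by (induction n) auto

lemma ct_mult0: "ct 2 (\<lambda>xs. xs ! 0 * xs ! 1)"
proof -
  have "ct (Suc 1) (\<lambda>xs. prk (\<lambda>xs. 0) (\<lambda>zs. zs ! 0 + zs ! Suc (Suc 0)) (hd xs) (tl xs))"
    by (rule ct_prim) (auto intro!: ct_add ct_proj ct_zero)
  then show ?thesis
    by (rule ct_cong') (auto simp: length_Suc_conv numeral_2_eq_2 prk_mult[simplified])
qed

lemma ct_mult: "ct k f \<Longrightarrow> ct k g \<Longrightarrow> ct k (\<lambda>xs. f xs * g xs)"
  using ct_comp2[OF ct_mult0] by simp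

lemma prk_pred: "prk (\<lambda>xs. 0) (\<lambda>zs. zs ! 1) n [] = n - 1"
  by (induction n) auto

lemma ct_pred0: "ct 1 (\<lambda>xs. xs ! 0 - 1)"
proof -
  have "ct (Suc 0) (\<lambda>xs. prk (\<lambda>xs. 0) (\<lambda>zs. zs ! 1) (hd xs) (tl xs))"
    by (rule ct_prim) (auto intro!: ct_proj ct_zero)
  then show ?thesis
    by (rule ct_cong') (auto simp: length_Suc_conv prk_pred[simplified])
qed

lemma prk_sub: "prk (\<lambda>xs. xs ! 0) (\<lambda>zs. zs ! 0 - 1) n [y] = y - n"
  by (induction n) auto

lemma ct_sub0: "ct 2 (\<lambda>xs. xs ! 1 - xs ! 0)"
proof -
  have "ct (Suc 1) (\<lambda>xs. prk (\<lambda>xs. xs ! 0) (\<lambda>zs. zs ! 0 - 1) (hd xs) (tl xs))"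
    by (rule ct_prim) (auto intro!: ct_proj ct_comp1[OF ct_pred0, simplified])
  then show ?thesis
    by (rule ct_cong') (auto simp: length_Suc_conv numeral_2_eq_2 prk_sub[simplified])
qed

lemma ct_sub: "ct k f \<Longrightarrow> ct k g \<Longrightarrow> ct k (\<lambda>xs. f xs - g xs)"
  using ct_comp2[OF ct_sub0, of k g f] by simp

lemma prk_pow: "prk (\<lambda>xs. 1) (\<lambda>zs. 2 * zs ! 0) n [] = 2 ^ n"
  by (induction n) auto

lemma ct_pow0: "ct 1 (\<lambda>xs. 2 ^ (xs ! 0))"
proof -
  have "ct (Suc 0) (\<lambda>xs. prk (\<lambda>xs. 1) (\<lambda>zs. 2 * zs ! 0) (hd xs) (tl xs))"
    by (rule ct_prim) (auto intro!: ct_proj ct_const ct_mult)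
  then show ?thesis
    by (rule ct_cong') (auto simp: length_Suc_conv prk_pow[simplified])
qed

lemma ct_pow: "ct k f \<Longrightarrow> ct k (\<lambda>xs. 2 ^ f xs)"
proof -
  assume f: "ct k f"
  have "ct k (\<lambda>xs. (\<lambda>ys. 2 ^ (ys ! 0)) [f xs])" by (rule ct_comp1[OF ct_pow0 f])
  then show ?thesis unfolding nth_Cons_0 .
qed

lemma least_div: "(d::nat) > 0 \<Longrightarrow> (LEAST q. Suc x - d * Suc q = 0) = x div d"
proof (rule Least_equality)
  assume d: "d > 0"
  have "x < d * Suc (x div d)"
    using d by (simp add: dividend_less_times_div)
  then show "Suc x - d * Suc (x div d) = 0" by simp
next
  fix q assume d: "d > 0" and "Suc x - d * Suc q = 0"
  then have "x < d * Suc q" by simp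
  then show "x div d \<le> q" using d by (metis less_Suc_eq_le less_mult_imp_div_less mult.commute)
qed

lemma ct_div0: "ct 2 (\<lambda>xs. xs ! 0 div Suc (xs ! 1 - 1))"
proof -
  have "ct 2 (\<lambda>xs. LEAST q. (\<lambda>zs. Suc (zs ! 1) - Suc (zs ! 2 - 1) * Suc (zs ! 0)) (q # xs) = 0)"
  proof (rule ct_mu)
    show "ct (Suc 2) (\<lambda>zs. Suc (zs ! 1) - Suc (zs ! 2 - 1) * Suc (zs ! 0))"
      by (intro ct_sub ct_suc ct_mult ct_proj ct_const) auto
  next
    fix xs :: "nat list" assume "length xs = 2"
    show "\<exists>n. (\<lambda>zs. Suc (zs ! 1) - Suc (zs ! 2 - 1) * Suc (zs ! 0)) (n # xs) = 0"
      by (rule exI[of _ "xs ! 0"]) (simp add: algebra_simps)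
  qed
  then show ?thesis 
  proof (rule ct_cong)
    fix xs :: "nat list" 
    show "(LEAST q. (\<lambda>zs. Suc (zs ! 1) - Suc (zs ! 2 - 1) * Suc (zs ! 0)) (q # xs) = 0) = xs ! 0 div Suc (xs ! 1 - 1)"
      using least_div[of "Suc (xs!1 - 1)" "xs!0"] by simp
  qed
qed

lemma ct_div: "ct k f \<Longrightarrow> ct k g \<Longrightarrow> (\<And>xs. length xs = k \<Longrightarrow> g xs > 0) \<Longrightarrow> ct k (\<lambda>xs. f xs div g xs)"
proof -
  assume f: "ct k f" and g: "ct k g" and p: "\<And>xs. length xs = k \<Longrightarrow> g xs > 0"
  have "ct k (\<lambda>xs. f xs div Suc (g xs - 1))" using ct_comp2[OF ct_div0 f g] by simp
  then show ?thesis by (rule ct_cong) (use p in auto)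
qed

lemma ct_div2: "ct k f \<Longrightarrow> ct k (\<lambda>xs. f xs div 2)"
  by (rule ct_div) (auto intro: ct_const)

lemma ct_divpow: "ct k f \<Longrightarrow> ct k g \<Longrightarrow> ct k (\<lambda>xs. f xs div 2 ^ g xs)"
  by (rule ct_div) (auto intro: ct_pow)

lemma ct_mod2: "ct k f \<Longrightarrow> ct k (\<lambda>xs. f xs mod 2)"
proof -
  assume f: "ct k f"
  have "ct k (\<lambda>xs. f xs - 2 * (f xs div 2))" by (intro ct_sub ct_mult ct_div2 ct_const f)
  then show ?thesis by (rule ct_cong) (simp add: minus_mult_div_eq_mod)
qed

definition cp :: "nat \<Rightarrow> (nat list \<Rightarrow> bool) \<Rightarrow> bool" where
  "cp k P \<longleftrightarrow> ct k (\<lambda>xs. if P xs then 1 else 0)"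

lemma cp_eq: "ct k f \<Longrightarrow> ct k g \<Longrightarrow> cp k (\<lambda>xs. f xs = g xs)"
  unfolding cp_def
proof -
  assume f: "ct k f" and g: "ct k g"
  have "ct k (\<lambda>xs. 1 - ((f xs - g xs) + (g xs - f xs)))" by (intro ct_sub ct_add ct_const f g)
  then show "ct k (\<lambda>xs. if f xs = g xs then 1 else 0)" by (rule ct_cong) auto
qed

lemma cp_less: "ct k f \<Longrightarrow> ct k g \<Longrightarrow> cp k (\<lambda>xs. f xs < g xs)"
  unfolding cp_def
proof -
  assume f: "ct k f" and g: "ct k g"
  have "ct k (\<lambda>xs. 1 - (1 - (g xs - f xs)))" by (intro ct_sub ct_add ct_const f g)
  then show "ct k (\<lambda>xs. if f xs < g xs then 1 else 0)" by (rule ct_cong) auto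
qed

lemma cp_not: "cp k P \<Longrightarrow> cp k (\<lambda>xs. \<not> P xs)"
  unfolding cp_def
proof -
  assume "ct k (\<lambda>xs. if P xs then 1 else 0)"
  then have "ct k (\<lambda>xs. 1 - (if P xs then 1 else 0))" by (intro ct_sub ct_const)
  then show "ct k (\<lambda>xs. if \<not> P xs then 1 else 0)" by (rule ct_cong) auto
qed

lemma cp_conj: "cp k P \<Longrightarrow> cp k Q \<Longrightarrow> cp k (\<lambda>xs. P xs \<and> Q xs)"
  unfolding cp_def
proof -
  assume "ct k (\<lambda>xs. if P xs then 1 else 0)" "ct k (\<lambda>xs. if Q xs then 1 else 0)"
  then have "ct k (\<lambda>xs. (if P xs then 1 else 0) * (if Q xs then 1 else 0))" by (intro ct_mult)
  then show "ct k (\<lambda>xs. if P xs \<and> Q xs then 1 else 0)" by (rule ct_cong) auto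
qed

lemma cp_bit: "ct k f \<Longrightarrow> ct k g \<Longrightarrow> cp k (\<lambda>xs. bit (f xs) (g xs))"
proof -
  assume "ct k f" "ct k g"
  then have "cp k (\<lambda>xs. f xs div 2 ^ g xs mod 2 = 1)" by (intro cp_eq ct_mod2 ct_divpow ct_const)
  then show ?thesis unfolding cp_def by (rule ct_cong) (simp add: bit_iff_odd odd_iff_mod_2_eq_one)
qed


lemma ct_if: "cp k P \<Longrightarrow> ct k f \<Longrightarrow> ct k g \<Longrightarrow> ct k (\<lambda>xs. if P xs then f xs else g xs)"
  unfolding cp_def
proof -
  assume "ct k (\<lambda>xs. if P xs then 1 else 0)" "ct k f" "ct k g"
  then have "ct k (\<lambda>xs. (if P xs then 1 else 0) * f xs + (1 - (if P xs then 1 else 0)) * g xs)"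
    by (intro ct_mult ct_add ct_sub ct_const)
  then show "ct k (\<lambda>xs. if P xs then f xs else g xs)" by (rule ct_cong) auto
qed

lemma ct_least: "cp (Suc k) P \<Longrightarrow> (\<And>xs. length xs = k \<Longrightarrow> \<exists>n. P (n # xs)) \<Longrightarrow>
   ct k (\<lambda>xs. LEAST n. P (n # xs))"
proof -
  assume p: "cp (Suc k) P" and ex: "\<And>xs. length xs = k \<Longrightarrow> \<exists>n. P (n # xs)"
  have c: "ct (Suc k) (\<lambda>xs. if \<not> P xs then 1 else 0)" using cp_not[OF p] unfolding cp_def .
  have e: "\<exists>n. (\<lambda>xs. if \<not> P xs then 1 else (0::nat)) (n # xs) = 0" if "length xs = k" for xs
    using ex[OF that] by auto
  have "ct k (\<lambda>xs. LEAST n. (\<lambda>xs. if \<not> P xs then 1 else (0::nat)) (n # xs) = 0)"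
    by (rule ct_mu[OF c e])
  then show ?thesis by (rule ct_cong) simp
qed

lemma ct_sum: "ct (Suc k) f \<Longrightarrow> ct k g \<Longrightarrow> ct k (\<lambda>xs. \<Sum>j<g xs. f (j # xs))"
proof -
  assume f: "ct (Suc k) f" and g: "ct k g"
  have h: "ct (Suc (Suc k)) (\<lambda>zs. zs ! 0 + f (tl zs))" by (intro ct_add ct_proj ct_tl f) auto
  have e: "prk (\<lambda>xs. 0) (\<lambda>zs. zs ! 0 + f (tl zs)) n xs = (\<Sum>j<n. f (j # xs))" for n xs
    by (induction n) auto
  have "ct (Suc k) (\<lambda>ys. prk (\<lambda>xs. 0) (\<lambda>zs. zs ! 0 + f (tl zs)) (hd ys) (tl ys))"
    by (rule ct_prim[OF ct_zero h])
  then have "ct k (\<lambda>xs. (\<lambda>ys. prk (\<lambda>xs. 0) (\<lambda>zs. zs ! 0 + f (tl zs)) (hd ys) (tl ys)) (g xs # xs))"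
    by (rule ct_cons[OF _ g])
  then show ?thesis by (rule ct_cong) (simp add: e)
qed


definition tlc :: "nat \<Rightarrow> nat" where "tlc y = (y - 1) div 2"
definition hdc :: "nat \<Rightarrow> nat" where "hdc y = (y - 1) mod 2"

primrec itl :: "nat \<Rightarrow> nat \<Rightarrow> nat" where
  "itl 0 y = y"
| "itl (Suc k) y = tlc (itl k y)"

definition eqp :: "nat \<Rightarrow> nat \<Rightarrow> bool" where
  "eqp b m \<longleftrightarrow> itl (2*m) b \<noteq> 0 \<and> tlc (itl (2*m) b) \<noteq> 0 \<and> hdc (itl (2*m) b) = hdc (tlc (itl (2*m) b))"

definition ftp :: "nat \<Rightarrow> nat \<Rightarrow> bool" where
  "ftp b m \<longleftrightarrow> itl (2*m) b \<noteq> 0 \<and> tlc (itl (2*m) b) \<noteq> 0 \<and> hdc (itl (2*m) b) = 0 \<and> hdc (tlc (itl (2*m) b)) = 1"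

definition pm :: "nat \<Rightarrow> nat" where "pm b = (LEAST m. \<not> eqp b m)"
definition Acode :: "nat \<Rightarrow> nat" where "Acode b = itl (2 * pm b + 2) b"
definition Dcode :: "nat \<Rightarrow> nat" where "Dcode b = b - 2 ^ (2 * pm b + 2) * Acode b"
definition tk :: "nat \<Rightarrow> nat \<Rightarrow> nat" where "tk j a = a - 2 ^ j * itl j a"
definition key :: "nat \<Rightarrow> nat \<Rightarrow> nat \<Rightarrow> nat" where "key d p t = prod_encode (prod_encode (d, p), t)"
definition badj :: "nat \<Rightarrow> nat \<Rightarrow> nat \<Rightarrow> nat" where
  "badj j a b = (if itl j a \<noteq> 0 \<and> bit (Acode b) (key (Dcode b) (tk j a) 0) then 1 else 0)"
definition good :: "nat \<Rightarrow> nat \<Rightarrow> bool" where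
  "good a b \<longleftrightarrow> ftp b (pm b) \<and> bit (Acode b) (key (Dcode b) a 0) \<and> (\<Sum>j<a. badj j a b) = 0"
definition FF :: "nat \<Rightarrow> nat \<Rightarrow> nat \<Rightarrow> nat" where
  "FF i a b = (if good a b \<and> bit (Acode b) (key (Dcode b) a (Suc i)) then 0 else 1)"
definition Mnum :: "nat \<Rightarrow> nat \<Rightarrow> nat option" where
  "Mnum a b = (if \<exists>i. FF i a b = 0 then Some (LEAST i. FF i a b = 0) else None)"
definition MM :: machine where
  "MM p y = map_option bl_of_nat (Mnum (nat_of_bl p) (nat_of_bl y))"

lemma ct_tlc: "ct k f \<Longrightarrow> ct k (\<lambda>xs. tlc (f xs))"
  unfolding tlc_def by (intro ct_div2 ct_sub ct_const)

lemma ct_hdc: "ct k f \<Longrightarrow> ct k (\<lambda>xs. hdc (f xs))"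
  unfolding hdc_def by (intro ct_mod2 ct_sub ct_const)

lemma prk_itl: "prk (\<lambda>xs. xs ! 0) (\<lambda>zs. tlc (zs ! 0)) n [y] = itl n y"
  by (induction n) auto

lemma ct_itl0: "ct 2 (\<lambda>xs. itl (xs ! 0) (xs ! 1))"
proof -
  have "ct (Suc 1) (\<lambda>xs. prk (\<lambda>xs. xs ! 0) (\<lambda>zs. tlc (zs ! 0)) (hd xs) (tl xs))"
    by (rule ct_prim) (auto intro!: ct_proj ct_tlc)
  then show ?thesis
    by (rule ct_cong') (auto simp: length_Suc_conv numeral_2_eq_2 prk_itl[simplified])
qed

lemma ct_itl: "ct k f \<Longrightarrow> ct k g \<Longrightarrow> ct k (\<lambda>xs. itl (f xs) (g xs))"
proof -
  assume f: "ct k f" and g: "ct k g"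
  have "ct k (\<lambda>xs. (\<lambda>ys. itl (ys ! 0) (ys ! 1)) [f xs, g xs])" by (rule ct_comp2[OF ct_itl0 f g])
  then show ?thesis by simp
qed

lemma ct_prod_encode: "ct k f \<Longrightarrow> ct k g \<Longrightarrow> ct k (\<lambda>xs. prod_encode (f xs, g xs))"
proof -
  assume f: "ct k f" and g: "ct k g"
  have "ct k (\<lambda>xs. (f xs + g xs) * Suc (f xs + g xs) div 2 + f xs)"
    by (intro ct_add ct_div2 ct_mult ct_suc f g)
  then show ?thesis by (rule ct_cong) (simp add: prod_encode_def triangle_def)
qed

lemma ct_key: "ct k f \<Longrightarrow> ct k g \<Longrightarrow> ct k h \<Longrightarrow> ct k (\<lambda>xs. key (f xs) (g xs) (h xs))"
  unfolding key_def by (intro ct_prod_encode)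

lemma cp_eqp: "cp 2 (\<lambda>xs. eqp (xs ! 0) (xs ! 1))"
  unfolding eqp_def
  by (intro cp_conj cp_not cp_eq ct_itl ct_tlc ct_hdc ct_mult ct_const ct_proj) auto

lemma cp_ftp: "cp 2 (\<lambda>xs. ftp (xs ! 0) (xs ! 1))"
  unfolding ftp_def
  by (intro cp_conj cp_not cp_eq ct_itl ct_tlc ct_hdc ct_mult ct_const ct_proj) auto

lemma tlc_le: "tlc y \<le> y - 1"
  unfolding tlc_def by simp

lemma itl_le: "itl k y \<le> y - k"
proof (induction k)
  case 0 then show ?case by simp
next
  case (Suc k) then show ?case using tlc_le[of "itl k y"] by simp
qed

lemma ex_not_eqp: "\<exists>m. \<not> eqp b m"
proof -
  have "itl (2 * b) b = 0" using itl_le[of "2*b" b] by simp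
  then show ?thesis unfolding eqp_def by blast
qed

lemma cp_eqp': "ct k f \<Longrightarrow> ct k g \<Longrightarrow> cp k (\<lambda>xs. eqp (f xs) (g xs))"
proof -
  assume f: "ct k f" and g: "ct k g"
  have "ct k (\<lambda>xs. (\<lambda>ys. if eqp (ys ! 0) (ys ! 1) then 1 else 0) [f xs, g xs])" 
    using cp_eqp unfolding cp_def by (rule ct_comp2[OF _ f g])
  then show ?thesis unfolding cp_def by simp
qed

lemma ct_pm0: "ct 1 (\<lambda>xs. pm (xs ! 0))"
proof -
  have c: "cp (Suc 1) (\<lambda>zs. \<not> eqp (zs ! 1) (zs ! 0))"
    by (intro cp_not cp_eqp' ct_proj) auto
  have "ct 1 (\<lambda>xs. LEAST n. (\<lambda>zs. \<not> eqp (zs ! 1) (zs ! 0)) (n # xs))"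
    by (rule ct_least[OF c]) (simp add: ex_not_eqp)
  then show ?thesis by (rule ct_cong) (simp add: pm_def)
qed

lemma ct_pm: "ct k f \<Longrightarrow> ct k (\<lambda>xs. pm (f xs))"
proof -
  assume f: "ct k f"
  have "ct k (\<lambda>xs. (\<lambda>ys. pm (ys ! 0)) [f xs])" by (rule ct_comp1[OF ct_pm0 f])
  then show ?thesis by simp
qed

lemma cp_ftp': "ct k f \<Longrightarrow> ct k g \<Longrightarrow> cp k (\<lambda>xs. ftp (f xs) (g xs))"
proof -
  assume f: "ct k f" and g: "ct k g"
  have "ct k (\<lambda>xs. (\<lambda>ys. if ftp (ys ! 0) (ys ! 1) then 1 else 0) [f xs, g xs])" 
    using cp_ftp unfolding cp_def by (rule ct_comp2[OF _ f g])
  then show ?thesis unfolding cp_def by simp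
qed

lemma ct_Acode: "ct k f \<Longrightarrow> ct k (\<lambda>xs. Acode (f xs))"
  unfolding Acode_def by (intro ct_itl ct_add ct_mult ct_pm ct_const)

lemma ct_Dcode: "ct k f \<Longrightarrow> ct k (\<lambda>xs. Dcode (f xs))"
  unfolding Dcode_def by (intro ct_sub ct_mult ct_pow ct_Acode ct_add ct_pm ct_const)

lemma ct_tk: "ct k f \<Longrightarrow> ct k g \<Longrightarrow> ct k (\<lambda>xs. tk (f xs) (g xs))"
  unfolding tk_def by (intro ct_sub ct_mult ct_pow ct_itl)

lemma ct_badj: "ct 3 (\<lambda>xs. badj (xs ! 0) (xs ! 1) (xs ! 2))"
  unfolding badj_def
  by (intro ct_if cp_conj cp_not cp_eq cp_bit ct_Acode ct_key ct_Dcode ct_tk ct_itl ct_proj ct_const) auto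

lemma ct_sumbad: "ct 2 (\<lambda>xs. \<Sum>j<xs ! 0. badj j (xs ! 0) (xs ! 1))"
proof -
  have "ct 2 (\<lambda>xs. \<Sum>j<xs ! 0. (\<lambda>zs. badj (zs ! 0) (zs ! 1) (zs ! 2)) (j # xs))"
  proof (rule ct_sum)
    show "ct (Suc 2) (\<lambda>zs. badj (zs ! 0) (zs ! 1) (zs ! 2))"
      by (rule ct_cong'[OF ct_badj]) simp_all
  qed (auto intro: ct_proj)
  then show ?thesis by (rule ct_cong) simp
qed

lemma cp_good: "cp 2 (\<lambda>xs. good (xs ! 0) (xs ! 1))"
proof -
  have s: "cp 2 (\<lambda>xs. (\<Sum>j<xs ! 0. badj j (xs ! 0) (xs ! 1)) = 0)" by (rule cp_eq[OF ct_sumbad ct_const])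
  have p1: "ct 2 (\<lambda>xs. xs ! 1)" "ct 2 (\<lambda>xs. xs ! 0)" by (auto intro: ct_proj)
  have f: "cp 2 (\<lambda>xs. ftp (xs ! 1) (pm (xs ! 1)))" by (rule cp_ftp'[OF p1(1) ct_pm[OF p1(1)]])
  have b: "cp 2 (\<lambda>xs. bit (Acode (xs ! 1)) (key (Dcode (xs ! 1)) (xs ! 0) 0))"
    by (rule cp_bit[OF ct_Acode[OF p1(1)] ct_key[OF ct_Dcode[OF p1(1)] p1(2) ct_const]])
  show ?thesis using cp_conj[OF f cp_conj[OF b s]] unfolding cp_def
    by (rule ct_cong) (simp add: good_def)
qed

lemma cp_good': "ct k f \<Longrightarrow> ct k g \<Longrightarrow> cp k (\<lambda>xs. good (f xs) (g xs))"
proof -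
  assume f: "ct k f" and g: "ct k g"
  have "ct k (\<lambda>xs. (\<lambda>ys. if good (ys ! 0) (ys ! 1) then 1 else 0) [f xs, g xs])" 
    using cp_good unfolding cp_def by (rule ct_comp2[OF _ f g])
  then show ?thesis unfolding cp_def by simp
qed

lemma ct_FF: "ct 3 (\<lambda>xs. FF (xs ! 0) (xs ! 1) (xs ! 2))"
proof -
  have p: "ct 3 (\<lambda>xs. xs ! 0)" "ct 3 (\<lambda>xs. xs ! 1)" "ct 3 (\<lambda>xs. xs ! 2)" by (auto intro: ct_proj)
  have g: "cp 3 (\<lambda>xs. good (xs ! 1) (xs ! 2))" by (rule cp_good'[OF p(2) p(3)])
  have b: "cp 3 (\<lambda>xs. bit (Acode (xs ! 2)) (key (Dcode (xs ! 2)) (xs ! 1) (Suc (xs ! 0))))"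
    by (rule cp_bit[OF ct_Acode[OF p(3)] ct_key[OF ct_Dcode[OF p(3)] p(2) ct_suc[OF p(1)]]])
  have "ct 3 (\<lambda>xs. if good (xs ! 1) (xs ! 2) \<and> bit (Acode (xs ! 2)) (key (Dcode (xs ! 2)) (xs ! 1) (Suc (xs ! 0))) then 0 else 1)"
    by (rule ct_if[OF cp_conj[OF g b] ct_const ct_const])
  then show ?thesis by (rule ct_cong) (simp add: FF_def)
qed


lemma nat_bl_inv: "nat_of_bl (bl_of_nat n) = n"
proof (induction n rule: bl_of_nat.induct)
  case 1 then show ?case by simp
next
  case (2 n) then show ?case by simp
qed

lemma bl_nat_inv: "bl_of_nat (nat_of_bl l) = l"
proof (induction l)
  case Nil then show ?case by simp
next
  case (Cons b l)
  have "nat_of_bl (b # l) = Suc (2 * nat_of_bl l + (if b then 1 else 0))" by simp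
  then show ?case using Cons by simp
qed

lemma nat_of_bl_inj: "nat_of_bl l = nat_of_bl l' \<longleftrightarrow> l = l'"
  by (metis bl_nat_inv)

lemma nat_of_bl_append: "nat_of_bl (xs @ ys) = nat_of_bl xs + 2 ^ length xs * nat_of_bl ys"
  by (induction xs) auto

lemma nat_of_bl_0: "nat_of_bl l = 0 \<longleftrightarrow> l = []"
  by (cases l) auto

lemma len_le_nat: "length l \<le> nat_of_bl l"
  by (induction l) auto

lemma tlc_nat: "tlc (nat_of_bl l) = nat_of_bl (tl l)"
  by (cases l) (auto simp: tlc_def)

lemma hdc_nat: "hdc (nat_of_bl (b # l)) = (if b then 1 else 0)"
  by (auto simp: hdc_def)

lemma itl_nat: "itl k (nat_of_bl l) = nat_of_bl (drop k l)"
  by (induction k) (auto simp: tlc_nat drop_Suc tl_drop)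

lemma tk_nat: "tk j (nat_of_bl l) = nat_of_bl (take j l)"
proof (cases "j \<le> length l")
  case True
  have "nat_of_bl l = nat_of_bl (take j l) + 2 ^ j * nat_of_bl (drop j l)"
    using nat_of_bl_append[of "take j l" "drop j l"] True by simp
  have "tk j (nat_of_bl l) = nat_of_bl l - 2 ^ j * nat_of_bl (drop j l)"
    by (simp add: tk_def itl_nat)
  also have "\<dots> = nat_of_bl (take j l)" using \<open>nat_of_bl l = _\<close> by linarith
  finally show ?thesis .
next
  case False
  then show ?thesis by (simp add: tk_def itl_nat)
qed

lemma Mnum_iff: "Mnum a b = Some v \<longleftrightarrow> FF v a b = 0 \<and> (\<forall>m<v. FF m a b \<noteq> 0)"
proof
  assume "Mnum a b = Some v"
  then have ex: "\<exists>i. FF i a b = 0" and v: "v = (LEAST i. FF i a b = 0)"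
    unfolding Mnum_def by (auto split: if_splits)
  show "FF v a b = 0 \<and> (\<forall>m<v. FF m a b \<noteq> 0)"
    using LeastI_ex[OF ex] not_less_Least v by blast
next
  assume h: "FF v a b = 0 \<and> (\<forall>m<v. FF m a b \<noteq> 0)"
  then have "(LEAST i. FF i a b = 0) = v"
    by (intro Least_equality) (auto simp: not_less[symmetric])
  then show "Mnum a b = Some v" using h unfolding Mnum_def by auto
qed

lemma MM_computable: "computable_machine MM"
proof -
  have c: "ct (Suc 2) (\<lambda>xs. FF (xs ! 0) (xs ! 1) (xs ! 2))"
    by (rule ct_cong'[OF ct_FF]) simp_all
  obtain r where r: "\<forall>xs v. length xs = 2 \<longrightarrow> (reval r xs v \<longleftrightarrow>
      (\<lambda>xs. FF (xs ! 0) (xs ! 1) (xs ! 2)) (v # xs) = 0 \<and> (\<forall>m<v. (\<lambda>xs. FF (xs ! 0) (xs ! 1) (xs ! 2)) (m # xs) \<noteq> 0))"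
    using ct_mu_partial[OF c] by blast
  have "\<forall>a b v. reval r [a, b] v \<longleftrightarrow> map_option nat_of_bl (MM (bl_of_nat a) (bl_of_nat b)) = Some v"
  proof (intro allI)
    fix a b v
    have "map_option nat_of_bl (MM (bl_of_nat a) (bl_of_nat b)) = Mnum a b"
      unfolding MM_def by (cases "Mnum a b") (auto simp: nat_bl_inv)
    then show "reval r [a, b] v \<longleftrightarrow> map_option nat_of_bl (MM (bl_of_nat a) (bl_of_nat b)) = Some v"
      using r[rule_format, of "[a, b]" v] by (simp add: Mnum_iff)
  qed
  then show ?thesis unfolding computable_machine_def comp2_def by blast
qed

lemma MM_good: "MM p y \<noteq> None \<Longrightarrow> good (nat_of_bl p) (nat_of_bl y)"
  unfolding MM_def Mnum_def FF_def by (auto split: if_splits)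

lemma good_sum: "good a b \<Longrightarrow> j < a \<Longrightarrow> itl j a \<noteq> 0 \<Longrightarrow> \<not> bit (Acode b) (key (Dcode b) (tk j a) 0)"
proof -
  assume g: "good a b" and j: "j < a" and i: "itl j a \<noteq> 0"
  then have "badj j a b = 0" unfolding good_def by simp
  then show ?thesis using i unfolding badj_def by (auto split: if_splits)
qed

lemma MM_prefix_free: "prefix_free_machine MM"
  unfolding prefix_free_machine_def
proof (intro conjI MM_computable allI impI)
  fix y p q
  assume p: "MM p y \<noteq> None" and q: "MM q y \<noteq> None" and pq: "prefix p q"
  show "p = q"
  proof (rule ccontr)
    assume "p \<noteq> q"
    then have lt: "length p < length q" using pq
      by (metis prefix_length_less prefix_order.dual_order.not_eq_order_implies_strict)
    have tp: "take (length p) q = p" using pq by (metis append_eq_conv_conj prefixE)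
    have gp: "good (nat_of_bl p) (nat_of_bl y)" using MM_good[OF p] .
    have gq: "good (nat_of_bl q) (nat_of_bl y)" using MM_good[OF q] .
    have j1: "length p < nat_of_bl q" using lt len_le_nat[of q] by simp
    have j2: "itl (length p) (nat_of_bl q) \<noteq> 0" using lt by (simp add: itl_nat nat_of_bl_0)
    have "\<not> bit (Acode (nat_of_bl y)) (key (Dcode (nat_of_bl y)) (nat_of_bl p) 0)"
      using good_sum[OF gq j1 j2] by (simp add: tk_nat tp)
    moreover have "bit (Acode (nat_of_bl y)) (key (Dcode (nat_of_bl y)) (nat_of_bl p) 0)"
      using gp unfolding good_def by blast
    ultimately show False by blast
  qed
qed


fun walkT :: "form \<Rightarrow> bool list \<Rightarrow> bool list \<Rightarrow> nat option" where
  "walkT (Lit i b) x p = (if p = [] then Some i else None)"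
| "walkT (Or a c) x p = (if feval a x then walkT a x p else walkT c x p)"
| "walkT (And a c) x p = (case p of [] \<Rightarrow> None | d # p' \<Rightarrow> walkT (if d then a else c) x p')"

fun walkF :: "form \<Rightarrow> bool list \<Rightarrow> bool list \<Rightarrow> nat option" where
  "walkF (Lit i b) x p = (if p = [] then Some i else None)"
| "walkF (And a c) x p = (if \<not> feval a x then walkF a x p else walkF c x p)"
| "walkF (Or a c) x p = (case p of [] \<Rightarrow> None | d # p' \<Rightarrow> walkF (if d then a else c) x p')"

definition walk :: "form \<Rightarrow> bool list \<Rightarrow> bool list \<Rightarrow> nat option" where
  "walk \<phi> x p = (if feval \<phi> x then walkT \<phi> x p else walkF \<phi> x p)"

lemma walkT_pf: "walkT \<phi> x p \<noteq> None \<Longrightarrow> walkT \<phi> x (p @ r) \<noteq> None \<Longrightarrow> r = []"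
proof (induction \<phi> arbitrary: p)
  case (Lit i b) then show ?case by (auto split: if_splits)
next
  case (And a c) then show ?case by (cases p) (auto split: if_splits)
next
  case (Or a c) then show ?case by (auto split: if_splits)
qed

lemma walkF_pf: "walkF \<phi> x p \<noteq> None \<Longrightarrow> walkF \<phi> x (p @ r) \<noteq> None \<Longrightarrow> r = []"
proof (induction \<phi> arbitrary: p)
  case (Lit i b) then show ?case by (auto split: if_splits)
next
  case (And a c) then show ?case by (auto split: if_splits)
next
  case (Or a c) then show ?case by (cases p) (auto split: if_splits)
qed

lemma walk_pf: "walk \<phi> x p \<noteq> None \<Longrightarrow> walk \<phi> x (p @ r) \<noteq> None \<Longrightarrow> r = []"
  unfolding walk_def using walkT_pf walkF_pf by (auto split: if_splits)

lemma walkT_len: "walkT \<phi> x p \<noteq> None \<Longrightarrow> length p \<le> fdepth \<phi>"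
proof (induction \<phi> arbitrary: p)
  case (Lit i b) then show ?case by (auto split: if_splits)
next
  case (And a c) then show ?case by (cases p) (fastforce split: if_splits)+
next
  case (Or a c) then show ?case by (fastforce split: if_splits)
qed

lemma walkF_len: "walkF \<phi> x p \<noteq> None \<Longrightarrow> length p \<le> fdepth \<phi>"
proof (induction \<phi> arbitrary: p)
  case (Lit i b) then show ?case by (auto split: if_splits)
next
  case (And a c) then show ?case by (fastforce split: if_splits)
next
  case (Or a c) then show ?case by (cases p) (fastforce split: if_splits)+
qed

lemma walk_len: "walk \<phi> x p \<noteq> None \<Longrightarrow> length p \<le> fdepth \<phi>"
  unfolding walk_def using walkT_len walkF_len by (auto split: if_splits)

lemma game: "feval \<phi> x \<Longrightarrow> \<not> feval \<phi> y \<Longrightarrow> \<exists>p q i. walkT \<phi> x p = Some i \<and> walkF \<phi> y q = Some i \<and>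
   length p + length q \<le> fdepth \<phi> \<and> x ! (i - 1) \<noteq> y ! (i - 1) \<and> i \<in> fvars \<phi>"
proof (induction \<phi>)
  case (Lit i b)
  then show ?case by (intro exI[of _ "[]"] exI[of _ i]) (auto split: if_splits)
next
  case (And a c)
  show ?case
  proof (cases "feval a y")
    case False
    then obtain p q i where h: "walkT a x p = Some i" "walkF a y q = Some i"
      "length p + length q \<le> fdepth a" "x ! (i - 1) \<noteq> y ! (i - 1)" "i \<in> fvars a"
      using And by auto
    show ?thesis
      by (rule exI[of _ "True # p"], rule exI[of _ q], rule exI[of _ i]) (use h False in auto)
  next
    case True
    then have "\<not> feval c y" using And.prems by simp
    then obtain p q i where h: "walkT c x p = Some i" "walkF c y q = Some i"
      "length p + length q \<le> fdepth c" "x ! (i - 1) \<noteq> y ! (i - 1)" "i \<in> fvars c"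
      using And by auto
    show ?thesis
      by (rule exI[of _ "False # p"], rule exI[of _ q], rule exI[of _ i]) (use h True in auto)
  qed
next
  case (Or a c)
  show ?case
  proof (cases "feval a x")
    case True
    then obtain p q i where h: "walkT a x p = Some i" "walkF a y q = Some i"
      "length p + length q \<le> fdepth a" "x ! (i - 1) \<noteq> y ! (i - 1)" "i \<in> fvars a"
      using Or by auto
    show ?thesis
      by (rule exI[of _ p], rule exI[of _ "True # q"], rule exI[of _ i]) (use h True in auto)
  next
    case False
    then have "feval c x" using Or.prems by simp
    then obtain p q i where h: "walkT c x p = Some i" "walkF c y q = Some i"
      "length p + length q \<le> fdepth c" "x ! (i - 1) \<noteq> y ! (i - 1)" "i \<in> fvars c"
      using Or False by auto
    show ?thesis
      by (rule exI[of _ p], rule exI[of _ "False # q"], rule exI[of _ i]) (use h False Or.prems in auto)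
  qed
qed


abbreviation dbl :: "bool list \<Rightarrow> bool list" where
  "dbl x \<equiv> concat (map (\<lambda>b. [b, b]) x)"

definition Dc :: "bool list \<Rightarrow> nat" where
  "Dc x = nat_of_bl (dbl x @ [False, True])"

lemma dbl_len: "length (dbl x) = 2 * length x"
  by (induction x) auto

lemma dbl_drop: "m \<le> length x \<Longrightarrow> drop (2 * m) (dbl x @ r) = dbl (drop m x) @ r"
proof (induction x arbitrary: m)
  case Nil then show ?case by simp
next
  case (Cons b x) then show ?case by (cases m) auto
qed

lemma dbl_inj: "dbl x @ [False, True] = dbl x' @ [False, True] \<Longrightarrow> x = x'"
proof (induction x arbitrary: x')
  case Nil then show ?case by (cases x') auto
next
  case (Cons b x) then show ?case by (cases x') auto
qed

lemma Dc_inj: "Dc x = Dc x' \<Longrightarrow> x = x'"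
  unfolding Dc_def nat_of_bl_inj using dbl_inj by blast

lemma pair_bl_eq: "pair_bl x a = (dbl x @ [False, True]) @ a"
  unfolding pair_bl_def by simp

lemma itl_pair: "m \<le> length x \<Longrightarrow> itl (2 * m) (nat_of_bl (pair_bl x a)) = nat_of_bl (dbl (drop m x) @ [False, True] @ a)"
  unfolding itl_nat pair_bl_def using dbl_drop[of m x "[False, True] @ a"] by (simp del: drop_append)

lemma eqp_pair: "m < length x \<Longrightarrow> eqp (nat_of_bl (pair_bl x a)) m"
proof -
  assume m: "m < length x"
  then obtain c x' where d: "drop m x = c # x'" by (cases "drop m x") auto
  show ?thesis unfolding eqp_def using m
    by (simp add: itl_pair d tlc_nat hdc_nat nat_of_bl_0 del: nat_of_bl.simps)
qed

lemma not_eqp_pair: "\<not> eqp (nat_of_bl (pair_bl x a)) (length x)"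
  unfolding eqp_def by (simp add: itl_pair tlc_nat hdc_nat nat_of_bl_0 del: nat_of_bl.simps)

lemma ftp_pair: "ftp (nat_of_bl (pair_bl x a)) (length x)"
  unfolding ftp_def by (simp add: itl_pair tlc_nat hdc_nat nat_of_bl_0 del: nat_of_bl.simps)

lemma pm_pair: "pm (nat_of_bl (pair_bl x a)) = length x"
  unfolding pm_def
proof (rule Least_equality)
  show "\<not> eqp (nat_of_bl (pair_bl x a)) (length x)" by (rule not_eqp_pair)
next
  fix m assume "\<not> eqp (nat_of_bl (pair_bl x a)) m"
  then show "length x \<le> m" using eqp_pair not_le by blast
qed

lemma Acode_pair: "Acode (nat_of_bl (pair_bl x a)) = nat_of_bl a"
proof -
  have "drop (2 * length x + 2) (pair_bl x a) = a"
    unfolding pair_bl_def by (simp add: dbl_len)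
  then show ?thesis unfolding Acode_def pm_pair itl_nat by simp
qed

lemma Dcode_pair: "Dcode (nat_of_bl (pair_bl x a)) = Dc x"
proof -
  have "nat_of_bl (pair_bl x a) = Dc x + 2 ^ (2 * length x + 2) * nat_of_bl a"
    unfolding pair_bl_eq nat_of_bl_append Dc_def by (simp add: dbl_len)
  then show ?thesis unfolding Dcode_def pm_pair Acode_pair by simp
qed

lemma bits_exist: "finite K \<Longrightarrow> \<exists>A::nat. \<forall>k. bit A k \<longleftrightarrow> k \<in> K"
proof (induction K rule: finite_induct)
  case empty 
  have "\<forall>k. bit (0::nat) k \<longleftrightarrow> k \<in> {}" by simp
  then show ?case by blast
next
  case (insert k K)
  then obtain A :: nat where "\<forall>j. bit A j \<longleftrightarrow> j \<in> K" by blast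
  moreover have "bit (or A (2 ^ k)) j \<longleftrightarrow> bit A j \<or> j = k" for j
    by (simp add: bit_or_iff bit_exp_iff)
  ultimately have "\<forall>j. bit (or A (2 ^ k)) j \<longleftrightarrow> j \<in> insert k K" by auto
  then show ?case by blast
qed

definition Sset :: "form \<Rightarrow> nat \<Rightarrow> (bool list \<times> bool list) set" where
  "Sset \<phi> n = {(x, p). length x = n \<and> walk \<phi> x p \<noteq> None}"

definition Kset :: "form \<Rightarrow> nat \<Rightarrow> nat set" where
  "Kset \<phi> n = (\<lambda>(x, p). key (Dc x) (nat_of_bl p) 0) ` Sset \<phi> n \<union>
     (\<lambda>(x, p). key (Dc x) (nat_of_bl p) (Suc (the (walk \<phi> x p)))) ` Sset \<phi> n"

lemma Sset_finite: "finite (Sset \<phi> n)"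
proof -
  have "Sset \<phi> n \<subseteq> {x. set x \<subseteq> (UNIV::bool set) \<and> length x = n} \<times> {p. set p \<subseteq> (UNIV::bool set) \<and> length p \<le> fdepth \<phi>}"
    unfolding Sset_def using walk_len by auto
  moreover have "finite ({x. set x \<subseteq> (UNIV::bool set) \<and> length x = n} \<times> {p. set p \<subseteq> (UNIV::bool set) \<and> length p \<le> fdepth \<phi>})"
    by (intro finite_cartesian_product finite_lists_length_eq finite_lists_length_le) auto
  ultimately show ?thesis by (rule finite_subset)
qed

lemma Kset_finite: "finite (Kset \<phi> n)"
  unfolding Kset_def using Sset_finite by auto

lemma key_inj: "key d p t = key d' p' t' \<longleftrightarrow> d = d' \<and> p = p' \<and> t = t'"
  unfolding key_def by auto

lemma Kset_iff: "key (Dc x) (nat_of_bl p) t \<in> Kset \<phi> n \<longleftrightarrow>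
   (x, p) \<in> Sset \<phi> n \<and> (t = 0 \<or> t = Suc (the (walk \<phi> x p)))"
  unfolding Kset_def by (auto simp: key_inj nat_of_bl_inj dest: Dc_inj)


lemma MM_table:
  assumes A: "\<forall>k. bit A k \<longleftrightarrow> k \<in> Kset \<phi> n"
    and x: "length x = n" and w: "walk \<phi> x p = Some i"
  shows "MM p (pair_bl x (bl_of_nat A)) = Some (bl_of_nat i)"
proof -
  define a where "a = nat_of_bl p"
  define b where "b = nat_of_bl (pair_bl x (bl_of_nat A))"
  have pm: "pm b = length x" unfolding b_def by (rule pm_pair)
  have Ac: "Acode b = A" unfolding b_def Acode_pair nat_bl_inv ..
  have Dc: "Dcode b = Dc x" unfolding b_def by (rule Dcode_pair)
  have S: "(x, p) \<in> Sset \<phi> n" unfolding Sset_def using x w by simp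
  have bitK: "bit (Acode b) (key (Dcode b) (nat_of_bl q) t) \<longleftrightarrow>
      (x, q) \<in> Sset \<phi> n \<and> (t = 0 \<or> t = Suc (the (walk \<phi> x q)))" for q t
    unfolding Ac Dc using A Kset_iff by blast
  have bad: "badj j a b = 0" if j: "j < a" for j
  proof (rule ccontr)
    assume "badj j a b \<noteq> 0"
    then have i: "itl j a \<noteq> 0" and bt: "bit (Acode b) (key (Dcode b) (tk j a) 0)"
      unfolding badj_def by (auto split: if_splits)
    have dj: "drop j p \<noteq> []" using i unfolding a_def itl_nat nat_of_bl_0 .
    have "bit (Acode b) (key (Dcode b) (nat_of_bl (take j p)) 0)" using bt unfolding a_def tk_nat .
    then have "walk \<phi> x (take j p) \<noteq> None" using bitK unfolding Sset_def by blast
    moreover have "walk \<phi> x (take j p @ drop j p) \<noteq> None" using w by simp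
    ultimately have "drop j p = []" by (rule walk_pf)
    then show False using dj by simp
  qed
  have good: "good a b"
    unfolding good_def
  proof (intro conjI)
    show "ftp b (pm b)" unfolding pm unfolding b_def by (rule ftp_pair)
    show "bit (Acode b) (key (Dcode b) a 0)" unfolding a_def using bitK S by blast
    show "(\<Sum>j<a. badj j a b) = 0" using bad by simp
  qed
  have FF: "FF v a b = 0 \<longleftrightarrow> v = i" for v
    unfolding FF_def using good bitK[of p "Suc v"] S w unfolding a_def by auto
  have "Mnum a b = Some i" unfolding Mnum_iff using FF by auto
  then show ?thesis unfolding MM_def a_def b_def by simp
qed

fun bigAnd :: "form list \<Rightarrow> form" where
  "bigAnd [] = Lit 1 True"
| "bigAnd [a] = a"
| "bigAnd (a # c # l) = And a (bigAnd (c # l))"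

fun bigOr :: "form list \<Rightarrow> form" where
  "bigOr [] = Lit 1 True"
| "bigOr [a] = a"
| "bigOr (a # c # l) = Or a (bigOr (c # l))"

lemma bigAnd_eval: "l \<noteq> [] \<Longrightarrow> feval (bigAnd l) z \<longleftrightarrow> (\<forall>a\<in>set l. feval a z)"
  by (induction l rule: bigAnd.induct) auto

lemma bigAnd_vars: "l \<noteq> [] \<Longrightarrow> fvars (bigAnd l) = (\<Union>a\<in>set l. fvars a)"
  by (induction l rule: bigAnd.induct) auto

lemma bigOr_eval: "l \<noteq> [] \<Longrightarrow> feval (bigOr l) z \<longleftrightarrow> (\<exists>a\<in>set l. feval a z)"
  by (induction l rule: bigOr.induct) auto

lemma bigOr_vars: "l \<noteq> [] \<Longrightarrow> fvars (bigOr l) = (\<Union>a\<in>set l. fvars a)"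
  by (induction l rule: bigOr.induct) auto

definition mt :: "bool list \<Rightarrow> form" where
  "mt x = bigAnd (map (\<lambda>i. Lit (Suc i) (x ! i)) [0..<length x])"

lemma mt_eval: "x \<noteq> [] \<Longrightarrow> length z = length x \<Longrightarrow> feval (mt x) z \<longleftrightarrow> z = x"
proof -
  assume ne: "x \<noteq> []" and l: "length z = length x"
  have "feval (mt x) z \<longleftrightarrow> (\<forall>i<length x. z ! i = x ! i)"
    unfolding mt_def using ne by (subst bigAnd_eval) auto
  also have "\<dots> \<longleftrightarrow> z = x" using l by (auto simp: list_eq_iff_nth_eq)
  finally show ?thesis .
qed

lemma mt_vars: "x \<noteq> [] \<Longrightarrow> fvars (mt x) \<subseteq> {1..length x}"
  unfolding mt_def by (subst bigAnd_vars) auto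

lemma dnf: "length x = n \<Longrightarrow> length y = n \<Longrightarrow> f x \<noteq> f y \<Longrightarrow> \<exists>\<phi>. computes n \<phi> f"
proof -
  assume lx: "length x = n" and ly: "length y = n" and fxy: "f x \<noteq> f y"
  have n: "n \<noteq> 0" using lx ly fxy by auto
  have fin: "finite {z. length z = n \<and> f z}"
  proof (rule finite_subset)
    show "{z. length z = n \<and> f z} \<subseteq> {z. set z \<subseteq> (UNIV :: bool set) \<and> length z = n}" by blast
    show "finite {z. set z \<subseteq> (UNIV :: bool set) \<and> length z = n}" by (rule finite_lists_length_eq) simp
  qed
  obtain L where L: "set L = {z. length z = n \<and> f z}" using finite_list[OF fin] by (elim exE)
  have "f x \<or> f y" using fxy by auto
  then have "x \<in> set L \<or> y \<in> set L" unfolding L using lx ly by blast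
  then have Lne: "L \<noteq> []" by auto
  have Lne2: "\<forall>z\<in>set L. z \<noteq> [] \<and> length z = n" unfolding L using n by auto
  define \<phi> where "\<phi> = bigOr (map mt L)"
  have "fvars \<phi> \<subseteq> {1..n}"
    unfolding \<phi>_def using Lne Lne2 mt_vars by (subst bigOr_vars) fastforce+
  moreover have "feval \<phi> z = f z" if "length z = n" for z
  proof -
    have "feval \<phi> z \<longleftrightarrow> (\<exists>w\<in>set L. feval (mt w) z)"
      unfolding \<phi>_def using Lne by (subst bigOr_eval) auto
    also have "\<dots> \<longleftrightarrow> (\<exists>w\<in>set L. z = w)" using Lne2 mt_eval that by auto
    also have "\<dots> \<longleftrightarrow> f z" using L that by auto
    finally show ?thesis .
  qed
  ultimately show ?thesis unfolding computes_def by blast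
qed


lemma KC_le: "U q b = Some a \<Longrightarrow> KC U a b \<le> length q"
  unfolding KC_def by (rule cInf_lower) (auto intro: bdd_belowI[of _ 0])

lemma KI_le:
  assumes h: "\<And>x y. length x = n \<Longrightarrow> length y = n \<Longrightarrow> f x \<noteq> f y \<Longrightarrow>
     \<exists>i. 1 \<le> i \<and> i \<le> n \<and> x ! (i - 1) \<noteq> y ! (i - 1) \<and>
       KC U (bl_of_nat i) (pair_bl x \<alpha>) + KC U (bl_of_nat i) (pair_bl y \<alpha>) \<le> B"
  shows "KI U n f \<le> B"
proof -
  define P where "P = {(x, y). length x = n \<and> length y = n \<and> f x \<noteq> f y}"
  define g where "g = (\<lambda>\<alpha>. SUP xy\<in>P. INF i\<in>{i. 1 \<le> i \<and> i \<le> n \<and> fst xy ! (i - 1) \<noteq> snd xy ! (i - 1)}.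
        KC U (bl_of_nat i) (pair_bl (fst xy) \<alpha>) + KC U (bl_of_nat i) (pair_bl (snd xy) \<alpha>))"
  have "KI U n f = (INF \<alpha>. g \<alpha>)" unfolding KI_def g_def P_def by simp
  also have "\<dots> \<le> g \<alpha>" by (rule cINF_lower) (auto intro: bdd_belowI[of _ 0])
  also have "g \<alpha> \<le> B"
  proof (cases "P = {}")
    case True then show ?thesis unfolding g_def by simp
  next
    case False
    show ?thesis unfolding g_def
    proof (rule cSUP_least[OF False])
      fix xy assume "xy \<in> P"
      then obtain x y where xy: "xy = (x, y)" "length x = n" "length y = n" "f x \<noteq> f y"
        unfolding P_def by auto
      obtain i where i: "1 \<le> i" "i \<le> n" "x ! (i - 1) \<noteq> y ! (i - 1)"
        "KC U (bl_of_nat i) (pair_bl x \<alpha>) + KC U (bl_of_nat i) (pair_bl y \<alpha>) \<le> B"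
        using h[OF xy(2-4)] by blast
      show "(INF i\<in>{i. 1 \<le> i \<and> i \<le> n \<and> fst xy ! (i - 1) \<noteq> snd xy ! (i - 1)}.
        KC U (bl_of_nat i) (pair_bl (fst xy) \<alpha>) + KC U (bl_of_nat i) (pair_bl (snd xy) \<alpha>)) \<le> B"
        by (rule cINF_lower2[where x = i]) (use i xy in \<open>auto intro: bdd_belowI[of _ 0]\<close>)
    qed
  qed
  finally show ?thesis .
qed

theorem mainTheorem5:
  fixes U :: machine
  assumes "universal_pf U"
  shows "\<exists>c::nat. \<forall>(n::nat) (f::bool list \<Rightarrow> bool). KI U n f \<le> depth n f + c"
proof -
  have u: "\<forall>M. prefix_free_machine M \<longrightarrow> (\<exists>\<sigma>. \<forall>p y. U (\<sigma> @ p) y = M p y)"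
    using assms unfolding universal_pf_def by (rule conjunct2)
  have "\<exists>\<sigma>. \<forall>p y. U (\<sigma> @ p) y = MM p y"
    using u MM_prefix_free by simp
  then obtain \<sigma> where \<sigma>: "\<forall>p y. U (\<sigma> @ p) y = MM p y" ..
  show ?thesis
  proof (intro exI[of _ "2 * length \<sigma>"] allI)
    fix n :: nat and f :: "bool list \<Rightarrow> bool"
    show "KI U n f \<le> depth n f + 2 * length \<sigma>"
    proof (cases "\<exists>\<phi>. computes n \<phi> f")
      case False
      have c: "f x = f y" if "length x = n" "length y = n" for x y
      proof (rule ccontr)
        assume "f x \<noteq> f y"
        from dnf[OF that this] False show False by (elim exE) simp
      qed
      have "KI U n f \<le> 0" by (rule KI_le[where \<alpha> = "[]"]) (use c in blast)
      then show ?thesis by simp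
    next
      case True
      then have ne: "fdepth ` {\<phi>. computes n \<phi> f} \<noteq> {}" by auto
      have "depth n f \<in> fdepth ` {\<phi>. computes n \<phi> f}"
        unfolding depth_def by (rule Inf_nat_def1[OF ne])
      then obtain \<phi> where c\<phi>': "\<phi> \<in> {\<phi>. computes n \<phi> f}" and d\<phi>': "depth n f = fdepth \<phi>" by (rule imageE)
      have c\<phi>: "computes n \<phi> f" using c\<phi>' by simp
      have d\<phi>: "fdepth \<phi> = depth n f" using d\<phi>' by simp
      obtain A :: nat where A: "\<forall>k. bit A k \<longleftrightarrow> k \<in> Kset \<phi> n" using bits_exist[OF Kset_finite] by blast
      define \<alpha> where "\<alpha> = bl_of_nat A"
      have KCb: "KC U (bl_of_nat i) (pair_bl x \<alpha>) \<le> length \<sigma> + length p"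
        if "length x = n" "walk \<phi> x p = Some i" for x p i
      proof -
        have "U (\<sigma> @ p) (pair_bl x \<alpha>) = Some (bl_of_nat i)"
          using \<sigma> MM_table[OF A that] unfolding \<alpha>_def by simp
        then show ?thesis using KC_le by fastforce
      qed
      have vars: "fvars \<phi> \<subseteq> {1..n}" using c\<phi> unfolding computes_def by blast
      have half: "\<exists>i. 1 \<le> i \<and> i \<le> n \<and> x ! (i - 1) \<noteq> y ! (i - 1) \<and>
          KC U (bl_of_nat i) (pair_bl x \<alpha>) + KC U (bl_of_nat i) (pair_bl y \<alpha>) \<le> depth n f + 2 * length \<sigma>"
        if xy: "length x = n" "length y = n" "feval \<phi> x" "\<not> feval \<phi> y" for x y
      proof -
        obtain p q i where g: "walkT \<phi> x p = Some i" "walkF \<phi> y q = Some i"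
          "length p + length q \<le> fdepth \<phi>" "x ! (i - 1) \<noteq> y ! (i - 1)" "i \<in> fvars \<phi>"
          using game[OF xy(3,4)] by blast
        have wx: "walk \<phi> x p = Some i" unfolding walk_def using g xy by simp
        have wy: "walk \<phi> y q = Some i" unfolding walk_def using g xy by simp
        have "KC U (bl_of_nat i) (pair_bl x \<alpha>) + KC U (bl_of_nat i) (pair_bl y \<alpha>)
            \<le> (length \<sigma> + length p) + (length \<sigma> + length q)"
          using KCb[OF xy(1) wx] KCb[OF xy(2) wy] by linarith
        also have "\<dots> \<le> depth n f + 2 * length \<sigma>" using g(3) d\<phi> by linarith
        finally show ?thesis using g(4,5) vars by (intro exI[of _ i]) auto
      qed
      show ?thesis
      proof (rule KI_le[where \<alpha> = \<alpha>])
        fix x y assume lx: "length x = n" and ly: "length y = n" and fxy: "f x \<noteq> f y"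
        have fe: "feval \<phi> x = f x" "feval \<phi> y = f y" using c\<phi> lx ly unfolding computes_def by auto
        show "\<exists>i. 1 \<le> i \<and> i \<le> n \<and> x ! (i - 1) \<noteq> y ! (i - 1) \<and>
          KC U (bl_of_nat i) (pair_bl x \<alpha>) + KC U (bl_of_nat i) (pair_bl y \<alpha>) \<le> depth n f + 2 * length \<sigma>"
        proof (cases "f x")
          case True
          then show ?thesis using half[OF lx ly] fe fxy by simp
        next
          case False
          then have "\<exists>i. 1 \<le> i \<and> i \<le> n \<and> y ! (i - 1) \<noteq> x ! (i - 1) \<and>
            KC U (bl_of_nat i) (pair_bl y \<alpha>) + KC U (bl_of_nat i) (pair_bl x \<alpha>) \<le> depth n f + 2 * length \<sigma>"
            using half[OF ly lx] fe fxy by simp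
          then show ?thesis by (metis add.commute)
        qed
      qed
    qed
  qed
qed

end
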